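(* Let $\ell\ge1$ be an integer. The operator $S^\ell$ maps $(P_\ell)^{2\ell+1}$ into itself; let $S_\ell$ denote its restriction to this finite-dimensional space. Then the spectral radius satisfies $\rho(S_\ell)\le1$. Moreover, if $\rho(S_\ell)=1$, then there exist $c\in\mathbb{C}$ with $|c|=1$ and a nonzero $A\in(P_\ell)^{2\ell+1}$ such that $T^\ell(\omega)A(\omega)=c\,A(\omega^2)$ identically in $\omega$.
   Context: For $\ell\in\{\tfrac12,1,\tfrac32,\dots\}$ and $m,n\in\{-\ell,\dots,\ell\}$ let $\tau^\ell_{m,n}=\sqrt{\frac{(\ell-m)!(\ell+m)!}{(\ell-n)!(\ell+n)!}}\,\frac{i^{2\ell}}{2^\ell}\cdot[\text{coefficient of }z^{\ell-m}\text{ in }(z+1)^{\ell-n}(z-1)^{\ell+n}]$, and $\tau^\ell=(\tau^\ell_{m,n})$ (a unitary $(2\ell+1)\times(2\ell+1)$ matrix, indices $-\ell,\dots,\ell$). For integer $\ell\ge1$ let $T^\ell(\omega)=\tau^\ell\,\mathrm{diag}(\omega^{-\ell},\omega^{-\ell+1},\dots,\omega^{\ell})$. Let $P$ be the space of complex Laurent polynomials in $\omega$, and $P_\ell=\mathrm{span}_{\mathbb{C}}\{\omega^{-(\ell-1)},\dots,\omega^{\ell-1}\}$. Define $S^\ell:P^{2\ell+1}\to P^{2\ell+1}$ by: if $T^\ell(\omega)A=\big[\sum_j\beta_{h}(j)\omega^j\big]_{h=-\ell}^{\ell}$, then $S^\ell A=\big[\sum_j\beta_h(2j)\omega^j\big]_{h=-\ell}^{\ell}$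 (keep even-exponent terms and halve the exponents). *)

theory Defs
  imports Complex_Main "HOL-Computational_Algebra.Polynomial"
begin

text \<open>Conventions: the integer l (ell) is a nat; indices m,n,h range over the int
interval {-l..l}. A complex Laurent polynomial is represented by its coefficient
function int => complex (finite support). A vector A in P^(2l+1) is represented by
A :: int => int => complex, where A h j is the coefficient of w^j in component h;
components with h outside {-l..l} are taken to be 0.\<close>

definition tau :: "nat \<Rightarrow> int \<Rightarrow> int \<Rightarrow> complex" where
  "tau l m n =
     complex_of_real (sqrt ((fact (nat (int l - m)) * fact (nat (int l + m)))
                          / (fact (nat (int l - n)) * fact (nat (int l + n)))))
     * (\<i> ^ (2 * l) / 2 ^ l)
     * coeff ([:1, 1:] ^ nat (int l - n) * [:-1, 1:] ^ nat (int l + n)) (nat (int l - m))"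

text \<open>Coefficient beta_h(j) of w^j in component h of T^l(w) A(w), where
T^l(w) = tau^l diag(w^-l, ..., w^l).\<close>
definition TA_coeff :: "nat \<Rightarrow> (int \<Rightarrow> int \<Rightarrow> complex) \<Rightarrow> int \<Rightarrow> int \<Rightarrow> complex" where
  "TA_coeff l A h j = (\<Sum>n\<in>{-int l..int l}. tau l h n * A n (j - n))"

definition S_op :: "nat \<Rightarrow> (int \<Rightarrow> int \<Rightarrow> complex) \<Rightarrow> (int \<Rightarrow> int \<Rightarrow> complex)" where
  "S_op l A = (\<lambda>h j. if h \<in> {-int l..int l} then TA_coeff l A h (2 * j) else 0)"

definition Pl_vec :: "nat \<Rightarrow> (int \<Rightarrow> int \<Rightarrow> complex) set" where
  "Pl_vec l = {A. \<forall>h j. A h j \<noteq> 0 \<longrightarrow>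
                   h \<in> {-int l..int l} \<and> - (int l - 1) \<le> j \<and> j \<le> int l - 1}"

definition S_eigenvalues :: "nat \<Rightarrow> complex set" where
  "S_eigenvalues l = {ev. \<exists>A\<in>Pl_vec l. A \<noteq> (\<lambda>h j. 0) \<and> S_op l A = (\<lambda>h j. ev * A h j)}"

definition rho_S :: "nat \<Rightarrow> real" where
  "rho_S l = Sup (cmod ` S_eigenvalues l)"

definition leval :: "(int \<Rightarrow> complex) \<Rightarrow> complex \<Rightarrow> complex" where
  "leval f w = (\<Sum>j\<in>{j. f j \<noteq> 0}. f j * w powi j)"

definition T_eval :: "nat \<Rightarrow> (int \<Rightarrow> int \<Rightarrow> complex) \<Rightarrow> complex \<Rightarrow> int \<Rightarrow> complex" where
  "T_eval l A w h = (\<Sum>n\<in>{-int l..int l}. tau l h n * w powi n * leval (A n) w)"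

end

theory Submission
  imports Defs "Jordan_Normal_Form.Spectral_Radius"
begin


lemma coeff_pow_p1: "coeff ([:1,1:]^n) i = (of_nat (n choose i) :: 'a::comm_ring_1)"
proof (cases "i \<le> n")
  case True thus ?thesis by (simp add: coeff_linear_poly_power)
next
  case False
  have "degree ([:1::'a,1:]^n) \<le> n"
    using degree_linear_power[of "1::'a" n] by simp
  thus ?thesis using False by (simp add: coeff_eq_0 binomial_eq_0)
qed

lemma coeff_pow_m1: "coeff ([:-1,1:]^n) i = (of_nat (n choose i) * (-1)^(n-i) :: 'a::comm_ring_1)"
proof (cases "i \<le> n")
  case True thus ?thesis by (simp add: coeff_linear_poly_power)
next
  case False
  have "degree ([:-1::'a,1:]^n) \<le> n"
    using degree_linear_power[of "-1::'a" n] by simp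
  thus ?thesis using False by (simp add: coeff_eq_0 binomial_eq_0)
qed

definition Kc :: "nat \<Rightarrow> nat \<Rightarrow> nat \<Rightarrow> complex" where
  "Kc N a c = coeff ([:1,1:]^c * [:-1,1:]^(N-c)) a"

definition Kt :: "nat \<Rightarrow> nat \<Rightarrow> nat \<Rightarrow> nat \<Rightarrow> complex" where
  "Kt N a c k = of_nat (c choose k) * of_nat ((N-c) choose (a-k)) * (-1)^(N-c-(a-k))"

lemma Kc_explicit: "Kc N a c = (\<Sum>k\<le>a. Kt N a c k)"
  unfolding Kc_def Kt_def coeff_mult coeff_pow_p1 coeff_pow_m1 by (simp add: mult.assoc)

lemma Kc_explicit2: "Kc N a c = (\<Sum>k\<le>min a c. Kt N a c k)"
  unfolding Kc_explicit
  by (rule sum.mono_neutral_right) (auto simp: Kt_def binomial_eq_0)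

lemma nat_fact_sym:
  assumes "k \<le> a" "k \<le> c" "a \<le> N" "c \<le> N"
  shows "fact a * fact (N-a) * ((c choose k) * ((N-c) choose (a-k)))
       = (fact c * fact (N-c) * ((a choose k) * ((N-a) choose (c-k))) :: nat)"
proof (cases "a - k \<le> N - c")
  case False
  hence "c - k > N - a" using assms by linarith
  thus ?thesis using False by (simp add: binomial_eq_0)
next
  case True
  define j where "j = N - c - (a - k)"
  have j2: "N - a - (c - k) = j" using True assms unfolding j_def by linarith
  have c1: "c - k \<le> N - a" using True assms by linarith
  have e1: "fact k * fact (c-k) * (c choose k) = (fact c :: nat)" by (rule binomial_fact_lemma) fact
  have e2: "fact (a-k) * fact j * ((N-c) choose (a-k)) = (fact (N-c) :: nat)"
    using binomial_fact_lemma[OF True] unfolding j_def .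
  have e3: "fact k * fact (a-k) * (a choose k) = (fact a :: nat)" by (rule binomial_fact_lemma) fact
  have e4: "fact (c-k) * fact j * ((N-a) choose (c-k)) = (fact (N-a) :: nat)"
    using binomial_fact_lemma[OF c1] unfolding j2 .
  define P where "P = fact k * fact (c-k) * fact (a-k) * (fact j :: nat)"
  have "P * (fact a * fact (N-a) * ((c choose k) * ((N-c) choose (a-k))))
      = fact a * fact (N-a) * ((fact k * fact (c-k) * (c choose k)) * (fact (a-k) * fact j * ((N-c) choose (a-k))))"
    unfolding P_def by (simp add: algebra_simps)
  also have "\<dots> = fact a * fact (N-a) * (fact c * fact (N-c))" using e1 e2 by simp
  also have "\<dots> = fact c * fact (N-c) * ((fact k * fact (a-k) * (a choose k)) * (fact (c-k) * fact j * ((N-a) choose (c-k))))"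
    using e3 e4 by simp
  also have "\<dots> = P * (fact c * fact (N-c) * ((a choose k) * ((N-a) choose (c-k))))"
    unfolding P_def by (simp add: algebra_simps)
  finally show ?thesis unfolding P_def by simp
qed

lemma Kc_sym:
  assumes "a \<le> N" "c \<le> N"
  shows "fact a * fact (N-a) * Kc N a c = fact c * fact (N-c) * Kc N c a"
proof -
  have "fact a * fact (N-a) * Kc N a c = (\<Sum>k\<le>min a c. fact a * fact (N-a) * Kt N a c k)"
    unfolding Kc_explicit2 by (simp add: sum_distrib_left)
  also have "\<dots> = (\<Sum>k\<le>min c a. fact c * fact (N-c) * Kt N c a k)"
  proof (rule sum.cong)
    fix k assume k: "k \<in> {..min c a}"
    show "fact a * fact (N-a) * Kt N a c k = fact c * fact (N-c) * Kt N c a k"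
    proof (cases "a - k \<le> N - c")
      case False
      hence "c - k > N - a" using assms k by auto
      thus ?thesis using False by (simp add: Kt_def binomial_eq_0)
    next
      case True
      have s: "N - c - (a - k) = N - a - (c - k)" using True assms k by auto
      have "of_nat (fact a * fact (N-a) * ((c choose k) * ((N-c) choose (a-k))))
          = (of_nat (fact c * fact (N-c) * ((a choose k) * ((N-a) choose (c-k)))) :: complex)"
        using nat_fact_sym[of k a c N] k assms by auto
      thus ?thesis unfolding Kt_def s by (simp add: algebra_simps)
    qed
  qed (auto simp: min.commute)
  also have "\<dots> = fact c * fact (N-c) * Kc N c a"
    unfolding Kc_explicit2 by (simp add: sum_distrib_left)
  finally show ?thesis .
qed




lemma poly_sum_upto:
  fixes p :: "complex poly"
  assumes "degree p \<le> N"
  shows "poly p x = (\<Sum>i\<le>N. coeff p i * x ^ i)"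
proof -
  have "poly p x = poly (\<Sum>i\<le>N. Polynomial.monom (coeff p i) i) x"
    using poly_as_sum_of_monoms'[OF assms] by simp
  also have "\<dots> = (\<Sum>i\<le>N. coeff p i * x ^ i)"
    by (simp add: poly_sum poly_monom)
  finally show ?thesis .
qed

lemma deg_Q: "degree ([:1::complex,1:]^e * [:-1,1:]^(N-e)) \<le> N" if "e \<le> N"
proof -
  have "degree ([:1::complex,1:]^e * [:-1,1:]^(N-e)) \<le> degree ([:1::complex,1:]^e) + degree ([:-1::complex,1:]^(N-e))"
    by (rule degree_mult_le)
  also have "\<dots> = e + (N - e)"
    using degree_linear_power[of "1::complex" e] degree_linear_power[of "-1::complex" "N-e"] by simp
  finally show ?thesis using that by simp
qed

lemma Kc_poly_identity:
  assumes e: "e \<le> N"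
  shows "(\<Sum>a\<le>N. Polynomial.smult (Kc N a e) ([:1,1:]^a * [:-1,1:]^(N-a))) = Polynomial.monom (2^N) e"
proof -
  define P where "P = (\<Sum>a\<le>N. Polynomial.smult (Kc N a e) ([:1::complex,1:]^a * [:-1,1:]^(N-a))) - Polynomial.monom (2^N) e"
  have roots: "poly P z = 0" if z: "z \<noteq> 1" for z
  proof -
    define u where "u = z - 1"
    have u: "u \<noteq> 0" using z unfolding u_def by simp
    define w where "w = (z+1)/u"
    let ?Q = "[:1::complex,1:]^e * [:-1,1:]^(N-e)"
    have "poly ?Q w = (\<Sum>a\<le>N. Kc N a e * w^a)"
      unfolding Kc_def by (rule poly_sum_upto[OF deg_Q[OF e]])
    hence A: "u^N * poly ?Q w = (\<Sum>a\<le>N. Kc N a e * ((z+1)^a * u^(N-a)))"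
      by (simp add: sum_distrib_left)
        (rule sum.cong, simp_all add: w_def power_divide u power_diff mult.commute mult.left_commute)
    have w1: "w + 1 = 2*z/u" unfolding w_def u_def using u u_def by (simp add: field_simps)
    have w2: "w - 1 = 2/u" unfolding w_def u_def using u u_def by (simp add: field_simps)
    have pq: "poly ?Q w = (w+1)^e * (w-1)^(N-e)" by (simp add: poly_power algebra_simps)
    have uN: "u^N = u^e * u^(N-e)" using e by (simp add: power_add[symmetric])
    have "u^N * poly ?Q w = u^e * u^(N-e) * ((2*z/u)^e * (2/u)^(N-e))"
      unfolding pq w1 w2 uN ..
    also have "\<dots> = (2*z)^e * 2^(N-e)"
      using u by (simp add: power_divide)
    also have "\<dots> = 2^N * z^e" using e
      by (simp add: power_mult_distrib power_add[symmetric])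
    finally have B: "u^N * poly ?Q w = 2^N * z^e" .
    show ?thesis unfolding P_def using A B
      by (simp add: poly_sum poly_monom u_def algebra_simps)
  qed
  have "P = 0"
  proof (rule ccontr)
    assume "P \<noteq> 0"
    hence "finite {z. poly P z = 0}" by (rule poly_roots_finite)
    moreover have "UNIV - {1} \<subseteq> {z. poly P z = 0}" using roots by auto
    ultimately have "finite (UNIV - {1::complex})" by (rule finite_subset[rotated])
    thus False by (simp add: infinite_UNIV_char_0)
  qed
  thus ?thesis unfolding P_def by simp
qed

lemma Kc_invol:
  assumes "e \<le> N"
  shows "(\<Sum>a\<le>N. Kc N c a * Kc N a e) = (if c = e then 2^N else 0)"
proof -
  have "coeff (\<Sum>a\<le>N. Polynomial.smult (Kc N a e) ([:1,1:]^a * [:-1,1:]^(N-a))) c = coeff (Polynomial.monom (2^N) e) c"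
    using Kc_poly_identity[OF assms] by simp
  thus ?thesis by (simp add: coeff_sum Kc_def[symmetric] mult.commute coeff_monom)
qed




definition Fr :: "nat \<Rightarrow> nat \<Rightarrow> real" where "Fr N a = fact a * fact (N - a)"

lemma Fr_pos: "Fr N a > 0" unfolding Fr_def by simp

lemma tau_alt:
  assumes m: "m \<in> {-int l..int l}" and n: "n \<in> {-int l..int l}"
  shows "tau l m n = complex_of_real (sqrt (Fr (2*l) (nat (int l - m)) / Fr (2*l) (nat (int l - n))))
                     * ((-1)^l / 2^l) * Kc (2*l) (nat (int l - m)) (nat (int l - n))"
proof -
  have e1: "nat (int l + m) = 2*l - nat (int l - m)" using m by auto
  have e2: "nat (int l + n) = 2*l - nat (int l - n)" using n by auto
  have ii: "\<i> ^ (2*l) = (-1::complex)^l" by (simp add: power_mult)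
  show ?thesis unfolding tau_def Kc_def Fr_def e1 e2 ii by simp
qed

lemma cnj_Kc: "cnj (Kc N a c) = Kc N a c"
  unfolding Kc_explicit Kt_def by simp

lemma cnj_tau:
  assumes m: "m \<in> {-int l..int l}" and n: "n \<in> {-int l..int l}"
  shows "cnj (tau l m n) = tau l m n"
  unfolding tau_alt[OF m n] by (simp add: cnj_Kc)

lemma sum_I_reindex:
  "(\<Sum>m\<in>{-int l..int l}. g m) = (\<Sum>a\<le>2*l. g (int l - int a))"
proof -
  have inj: "inj_on (\<lambda>a. int l - int a) {..2*l}" by (auto simp: inj_on_def)
  have img: "(\<lambda>a. int l - int a) ` {..2*l} = {-int l..int l}"
  proof
    show "{-int l..int l} \<subseteq> (\<lambda>a. int l - int a) ` {..2*l}"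
    proof
      fix m assume "m \<in> {-int l..int l}"
      hence "nat (int l - m) \<in> {..2*l}" "m = int l - int (nat (int l - m))" by auto
      thus "m \<in> (\<lambda>a. int l - int a) ` {..2*l}" by blast
    qed
  qed auto
  show ?thesis using sum.reindex[OF inj, of g] img by simp
qed

lemma tau_orth:
  assumes n: "n \<in> {-int l..int l}" and n': "n' \<in> {-int l..int l}"
  shows "(\<Sum>m\<in>{-int l..int l}. tau l m n * tau l m n') = (if n = n' then 1 else 0)"
proof -
  define N where "N = 2*l"
  define c where "c = nat (int l - n)"
  define c' where "c' = nat (int l - n')"
  have cN: "c \<le> N" "c' \<le> N" using n n' unfolding c_def c'_def N_def by auto
  define s where "s = ((-1::complex)^l / 2^l)"
  have four: "(2::complex)^(l+l) = 4^l" by (simp add: power_add power_mult_distrib[symmetric])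
  have s2: "s * s = 1 / 2^N" unfolding s_def N_def
    by (simp add: power_mult_distrib[symmetric] power_add[symmetric] mult_2 power_mult four)
  define r where "r = complex_of_real (sqrt (Fr N c * Fr N c'))"
  have tm: "tau l (int l - int a) n * tau l (int l - int a) n'
       = s * s / r * (complex_of_real (Fr N a) * Kc N a c) * Kc N a c'" if a: "a \<le> N" for a
  proof -
    have m: "int l - int a \<in> {-int l..int l}" using a unfolding N_def by auto
    have na: "nat (int l - (int l - int a)) = a" by simp
    have sq: "sqrt (Fr N a / Fr N c) * sqrt (Fr N a / Fr N c') = Fr N a / sqrt (Fr N c * Fr N c')"
      using Fr_pos[of N a] Fr_pos[of N c] Fr_pos[of N c']
      by (simp add: real_sqrt_mult[symmetric] real_sqrt_divide)
    show ?thesis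
      unfolding tau_alt[OF m n] tau_alt[OF m n'] na N_def[symmetric] c_def[symmetric] c'_def[symmetric]
        s_def[symmetric] r_def
      using sq[THEN arg_cong[where f=complex_of_real]]
      by (simp add: field_simps of_real_mult[symmetric] del: of_real_mult)
  qed
  have "(\<Sum>m\<in>{-int l..int l}. tau l m n * tau l m n')
      = (\<Sum>a\<le>N. s * s / r * (complex_of_real (Fr N a) * Kc N a c) * Kc N a c')"
    unfolding sum_I_reindex N_def[symmetric] by (rule sum.cong) (auto simp: tm)
  also have "\<dots> = (\<Sum>a\<le>N. s * s / r * complex_of_real (Fr N c) * (Kc N c a * Kc N a c'))"
  proof (rule sum.cong)
    fix a assume "a \<in> {..N}"
    hence "fact a * fact (N-a) * Kc N a c = fact c * fact (N-c) * Kc N c a"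
      using Kc_sym cN by auto
    thus "s * s / r * (complex_of_real (Fr N a) * Kc N a c) * Kc N a c'
        = s * s / r * complex_of_real (Fr N c) * (Kc N c a * Kc N a c')"
      unfolding Fr_def by (simp add: mult.assoc)
  qed simp
  also have "\<dots> = s * s / r * complex_of_real (Fr N c) * (\<Sum>a\<le>N. Kc N c a * Kc N a c')"
    by (simp only: sum_distrib_left)
  also have "\<dots> = s * s / r * complex_of_real (Fr N c) * (if c = c' then 2^N else 0)"
    by (simp only: Kc_invol[OF cN(2)])
  also have "\<dots> = (if n = n' then 1 else 0)"
  proof (cases "n = n'")
    case True
    hence "c = c'" unfolding c_def c'_def by simp
    moreover have "r = complex_of_real (Fr N c)" unfolding r_def \<open>c = c'\<close>[symmetric]
      using Fr_pos[of N c] by simp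
    ultimately show ?thesis using True s2 Fr_pos[of N c] by simp
  next
    case False
    hence "c \<noteq> c'" unfolding c_def c'_def using n n' by auto
    thus ?thesis using False by simp
  qed
  finally show ?thesis .
qed

lemma tau_norm:
  "(\<Sum>h\<in>{-int l..int l}. (cmod (\<Sum>n\<in>{-int l..int l}. tau l h n * x n))^2)
   = (\<Sum>n\<in>{-int l..int l}. (cmod (x n))^2)"
proof -
  let ?I = "{-int l..int l}"
  have st: "(\<Sum>n\<in>?I. tau l h n * x n) * cnj (\<Sum>n\<in>?I. tau l h n * x n)
      = (\<Sum>n\<in>?I. \<Sum>n'\<in>?I. x n * cnj (x n') * (tau l h n * tau l h n'))" if h: "h \<in> ?I" for h
    unfolding cnj_sum sum_product
  proof (rule sum.cong[OF refl], rule sum.cong[OF refl])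
    fix n n' assume "n \<in> ?I" "n' \<in> ?I"
    thus "tau l h n * x n * cnj (tau l h n' * x n') = x n * cnj (x n') * (tau l h n * tau l h n')"
      using cnj_tau[OF h] by (simp add: mult_ac)
  qed
  have "complex_of_real (\<Sum>h\<in>?I. (cmod (\<Sum>n\<in>?I. tau l h n * x n))^2)
     = (\<Sum>h\<in>?I. (\<Sum>n\<in>?I. tau l h n * x n) * cnj (\<Sum>n\<in>?I. tau l h n * x n))"
    by (simp only: of_real_sum complex_norm_square)
  also have "\<dots> = (\<Sum>h\<in>?I. \<Sum>n\<in>?I. \<Sum>n'\<in>?I. x n * cnj (x n') * (tau l h n * tau l h n'))"
    by (rule sum.cong[OF refl]) (rule st)
  also have "\<dots> = (\<Sum>n\<in>?I. \<Sum>h\<in>?I. \<Sum>n'\<in>?I. x n * cnj (x n') * (tau l h n * tau l h n'))"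
    by (rule sum.swap)
  also have "\<dots> = (\<Sum>n\<in>?I. \<Sum>n'\<in>?I. \<Sum>h\<in>?I. x n * cnj (x n') * (tau l h n * tau l h n'))"
    by (rule sum.cong[OF refl]) (rule sum.swap)
  also have "\<dots> = (\<Sum>n\<in>?I. \<Sum>n'\<in>?I. x n * cnj (x n') * (\<Sum>h\<in>?I. tau l h n * tau l h n'))"
    by (simp only: sum_distrib_left)
  also have "\<dots> = (\<Sum>n\<in>?I. \<Sum>n'\<in>?I. if n = n' then x n * cnj (x n) else 0)"
  proof (rule sum.cong[OF refl], rule sum.cong[OF refl])
    fix n n' assume "n \<in> ?I" "n' \<in> ?I"
    thus "x n * cnj (x n') * (\<Sum>h\<in>?I. tau l h n * tau l h n') = (if n = n' then x n * cnj (x n) else 0)"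
      by (simp add: tau_orth)
  qed
  also have "\<dots> = (\<Sum>n\<in>?I. x n * cnj (x n))"
    by (rule sum.cong[OF refl]) simp
  also have "\<dots> = complex_of_real (\<Sum>n\<in>?I. (cmod (x n))^2)"
    by (simp only: of_real_sum complex_norm_square)
  finally show ?thesis using of_real_eq_iff by blast
qed




abbreviation II :: "nat \<Rightarrow> int set" where "II l \<equiv> {-int l..int l}"
abbreviation JJ :: "nat \<Rightarrow> int set" where "JJ l \<equiv> {-(int l - 1)..int l - 1}"
abbreviation J2 :: "nat \<Rightarrow> int set" where "J2 l \<equiv> {-(2*int l - 1)..2*int l - 1}"

lemma Pl_zero: "A \<in> Pl_vec l \<Longrightarrow> \<not> (h \<in> II l \<and> j \<in> JJ l) \<Longrightarrow> A h j = 0"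
  unfolding Pl_vec_def by auto

lemma sum_nz: "sum f S \<noteq> 0 \<Longrightarrow> \<exists>x\<in>S. f x \<noteq> 0"
  by (meson sum.neutral)

lemma S_in_Pl: assumes A: "A \<in> Pl_vec l" shows "S_op l A \<in> Pl_vec l"
  unfolding Pl_vec_def mem_Collect_eq
proof (intro allI impI)
  fix h j assume nz: "S_op l A h j \<noteq> 0"
  hence h: "h \<in> II l" and t: "TA_coeff l A h (2*j) \<noteq> 0" unfolding S_op_def by (auto split: if_splits)
  from sum_nz[OF t[unfolded TA_coeff_def]] obtain n where n: "n \<in> II l" "tau l h n * A n (2*j - n) \<noteq> 0" by blast
  hence "A n (2*j - n) \<noteq> 0" by simp
  hence "2*j - n \<in> JJ l" using Pl_zero[OF A] by blast
  with n h show "h \<in> II l \<and> - (int l - 1) \<le> j \<and> j \<le> int l - 1" by auto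
qed

lemma TA_zero: assumes A: "A \<in> Pl_vec l" and j: "j \<notin> J2 l" shows "TA_coeff l A h j = 0"
  unfolding TA_coeff_def
proof (rule sum.neutral, rule ballI)
  fix n assume n: "n \<in> II l"
  have "j - n \<notin> JJ l" using n j by auto
  thus "tau l h n * A n (j - n) = 0" using Pl_zero[OF A] by simp
qed

lemma shift_sum:
  fixes g :: "int \<Rightarrow> 'a::comm_monoid_add"
  assumes g: "\<And>k. k \<notin> JJ l \<Longrightarrow> g k = 0" and n: "n \<in> II l"
  shows "(\<Sum>j\<in>J2 l. g (j - n)) = (\<Sum>k\<in>JJ l. g k)"
proof -
  have inj: "inj_on (\<lambda>k. k + n) (JJ l)" by (auto simp: inj_on_def)
  have "(\<Sum>k\<in>JJ l. g k) = (\<Sum>j\<in>(\<lambda>k. k + n) ` JJ l. g (j - n))"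
    using sum.reindex[OF inj, of "\<lambda>j. g (j - n)"] by simp
  also have "\<dots> = (\<Sum>j\<in>J2 l. g (j - n))"
  proof (rule sum.mono_neutral_left)
    show "(\<lambda>k. k + n) ` JJ l \<subseteq> J2 l" using n by auto
    show "\<forall>j\<in>J2 l - (\<lambda>k. k + n) ` JJ l. g (j - n) = 0"
    proof
      fix j assume "j \<in> J2 l - (\<lambda>k. k + n) ` JJ l"
      hence "j - n \<notin> JJ l" by (metis DiffD2 diff_add_cancel image_eqI)
      thus "g (j - n) = 0" by (rule g)
    qed
  qed simp
  finally show ?thesis by simp
qed

definition nrm :: "nat \<Rightarrow> (int \<Rightarrow> int \<Rightarrow> complex) \<Rightarrow> real" where
  "nrm l A = (\<Sum>h\<in>II l. \<Sum>j\<in>JJ l. (cmod (A h j))^2)"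

lemma TA_norm: assumes A: "A \<in> Pl_vec l"
  shows "(\<Sum>h\<in>II l. \<Sum>j\<in>J2 l. (cmod (TA_coeff l A h j))^2) = nrm l A"
proof -
  have "(\<Sum>h\<in>II l. \<Sum>j\<in>J2 l. (cmod (TA_coeff l A h j))^2)
      = (\<Sum>j\<in>J2 l. \<Sum>h\<in>II l. (cmod (\<Sum>n\<in>II l. tau l h n * A n (j - n)))^2)"
    unfolding TA_coeff_def by (rule sum.swap)
  also have "\<dots> = (\<Sum>j\<in>J2 l. \<Sum>n\<in>II l. (cmod (A n (j - n)))^2)"
    by (rule sum.cong[OF refl]) (rule tau_norm)
  also have "\<dots> = (\<Sum>n\<in>II l. \<Sum>j\<in>J2 l. (cmod (A n (j - n)))^2)"
    by (rule sum.swap)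
  also have "\<dots> = (\<Sum>n\<in>II l. \<Sum>k\<in>JJ l. (cmod (A n k))^2)"
  proof (rule sum.cong[OF refl])
    fix n assume n: "n \<in> II l"
    show "(\<Sum>j\<in>J2 l. (cmod (A n (j - n)))^2) = (\<Sum>k\<in>JJ l. (cmod (A n k))^2)"
      by (rule shift_sum[OF _ n]) (simp add: Pl_zero[OF A])
  qed
  finally show ?thesis unfolding nrm_def .
qed

definition EE :: "nat \<Rightarrow> int set" where "EE l = (\<lambda>j. 2*j) ` JJ l"

lemma EE_sub: "EE l \<subseteq> J2 l" unfolding EE_def by auto

lemma sum_EE: "(\<Sum>j\<in>EE l. f j) = (\<Sum>j\<in>JJ l. f (2*j))"
  unfolding EE_def by (subst sum.reindex) (auto simp: inj_on_def)

lemma split_norm: assumes A: "A \<in> Pl_vec l"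
  shows "nrm l A = nrm l (S_op l A) + (\<Sum>h\<in>II l. \<Sum>j\<in>J2 l - EE l. (cmod (TA_coeff l A h j))^2)"
proof -
  have "nrm l A = (\<Sum>h\<in>II l. \<Sum>j\<in>J2 l. (cmod (TA_coeff l A h j))^2)" using TA_norm[OF A] by simp
  also have "\<dots> = (\<Sum>h\<in>II l. (\<Sum>j\<in>EE l. (cmod (TA_coeff l A h j))^2) + (\<Sum>j\<in>J2 l - EE l. (cmod (TA_coeff l A h j))^2))"
    by (rule sum.cong[OF refl]) (subst sum.subset_diff[OF EE_sub finite_atLeastAtMost_int], rule add.commute)
  also have "\<dots> = (\<Sum>h\<in>II l. (\<Sum>j\<in>EE l. (cmod (TA_coeff l A h j))^2)) + (\<Sum>h\<in>II l. \<Sum>j\<in>J2 l - EE l. (cmod (TA_coeff l A h j))^2)"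
    by (rule sum.distrib)
  also have "(\<Sum>h\<in>II l. (\<Sum>j\<in>EE l. (cmod (TA_coeff l A h j))^2)) = nrm l (S_op l A)"
    unfolding nrm_def sum_EE S_op_def by simp
  finally show ?thesis .
qed

lemma nrm_pos: assumes A: "A \<in> Pl_vec l" and nz: "A \<noteq> (\<lambda>h j. 0)" shows "nrm l A > 0"
proof -
  obtain h j where hj: "A h j \<noteq> 0" using nz by blast
  hence h: "h \<in> II l" and j: "j \<in> JJ l" using Pl_zero[OF A] by blast+
  have "(\<Sum>j\<in>JJ l. (cmod (A h j))^2) > 0"
    by (rule sum_pos2[OF _ j]) (use hj in auto)
  hence "(\<Sum>h\<in>II l. \<Sum>j\<in>JJ l. (cmod (A h j))^2) > 0"
    by (intro sum_pos2[OF _ h]) (auto intro: sum_nonneg)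
  thus ?thesis unfolding nrm_def .
qed

lemma eigen_bound:
  assumes A: "A \<in> Pl_vec l" and nz: "A \<noteq> (\<lambda>h j. 0)" and ev: "S_op l A = (\<lambda>h j. c * A h j)"
  shows "cmod c \<le> 1" "cmod c = 1 \<Longrightarrow> \<forall>h\<in>II l. \<forall>j\<in>J2 l - EE l. TA_coeff l A h j = 0"
proof -
  define R where "R = (\<Sum>h\<in>II l. \<Sum>j\<in>J2 l - EE l. (cmod (TA_coeff l A h j))^2)"
  have R: "R \<ge> 0" unfolding R_def by (auto intro!: sum_nonneg)
  have ns: "nrm l (S_op l A) = (cmod c)^2 * nrm l A"
    unfolding ev nrm_def by (simp add: norm_mult power_mult_distrib sum_distrib_left)
  have eq: "nrm l A = (cmod c)^2 * nrm l A + R" using split_norm[OF A] ns unfolding R_def by simp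
  have p: "nrm l A > 0" by (rule nrm_pos[OF A nz])
  have "(cmod c)^2 * nrm l A \<le> 1 * nrm l A" using eq R by simp
  hence "(cmod c)^2 \<le> 1" using p by (simp only: mult_le_cancel_right)
  thus "cmod c \<le> 1" by (simp add: power_le_one_iff abs_square_le_1)
  assume "cmod c = 1"
  hence "R = 0" using eq by simp
  hence z: "\<forall>h\<in>II l. (\<Sum>j\<in>J2 l - EE l. (cmod (TA_coeff l A h j))^2) = 0"
    unfolding R_def by (subst (asm) sum_nonneg_eq_0_iff) (auto intro: sum_nonneg)
  show "\<forall>h\<in>II l. \<forall>j\<in>J2 l - EE l. TA_coeff l A h j = 0"
  proof (intro ballI)
    fix h j assume h: "h \<in> II l" and j: "j \<in> J2 l - EE l"
    have "(\<Sum>j\<in>J2 l - EE l. (cmod (TA_coeff l A h j))^2) = 0" using z h by blast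
    hence "\<forall>j\<in>J2 l - EE l. (cmod (TA_coeff l A h j))^2 = 0"
      by (subst (asm) sum_nonneg_eq_0_iff) auto
    thus "TA_coeff l A h j = 0" using j by simp
  qed
qed

lemma leval_J:
  assumes "\<And>j. j \<notin> JJ l \<Longrightarrow> f j = 0"
  shows "leval f w = (\<Sum>j\<in>JJ l. f j * w powi j)"
  unfolding leval_def
proof (rule sum.mono_neutral_left)
  show "{j. f j \<noteq> 0} \<subseteq> JJ l" using assms by blast
qed auto

lemma T_eval_eq:
  assumes A: "A \<in> Pl_vec l" and ev: "S_op l A = (\<lambda>h j. c * A h j)"
    and z: "\<forall>h\<in>II l. \<forall>j\<in>J2 l - EE l. TA_coeff l A h j = 0"
    and w: "w \<noteq> 0" and h: "h \<in> II l"
  shows "T_eval l A w h = c * leval (A h) (w ^ 2)"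
proof -
  have "T_eval l A w h = (\<Sum>n\<in>II l. tau l h n * w powi n * (\<Sum>k\<in>JJ l. A n k * w powi k))"
  proof (unfold T_eval_def, rule sum.cong[OF refl])
    fix n assume n: "n \<in> II l"
    have "leval (A n) w = (\<Sum>k\<in>JJ l. A n k * w powi k)"
      by (rule leval_J) (use Pl_zero[OF A] in blast)
    thus "tau l h n * w powi n * leval (A n) w = tau l h n * w powi n * (\<Sum>k\<in>JJ l. A n k * w powi k)" by simp
  qed
  also have "\<dots> = (\<Sum>n\<in>II l. \<Sum>k\<in>JJ l. tau l h n * A n k * w powi (k + n))"
    by (rule sum.cong[OF refl]) (simp add: sum_distrib_left power_int_add w mult_ac)
  also have "\<dots> = (\<Sum>n\<in>II l. \<Sum>j\<in>J2 l. tau l h n * A n (j - n) * w powi j)"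
  proof (rule sum.cong[OF refl])
    fix n assume n: "n \<in> II l"
    show "(\<Sum>k\<in>JJ l. tau l h n * A n k * w powi (k + n)) = (\<Sum>j\<in>J2 l. tau l h n * A n (j - n) * w powi j)"
      using shift_sum[of l "\<lambda>k. tau l h n * A n k * w powi (k + n)" n, OF _ n] by (simp add: Pl_zero[OF A])
  qed
  also have "\<dots> = (\<Sum>j\<in>J2 l. TA_coeff l A h j * w powi j)"
    unfolding TA_coeff_def sum_distrib_right by (rule sum.swap)
  also have "\<dots> = (\<Sum>j\<in>EE l. TA_coeff l A h j * w powi j)"
    by (rule sum.mono_neutral_right) (use z h EE_sub in auto)
  also have "\<dots> = (\<Sum>j\<in>JJ l. S_op l A h j * (w^2) powi j)"
    unfolding sum_EE S_op_def using h by (simp add: power_int_power)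
  also have "\<dots> = c * leval (A h) (w ^ 2)"
  proof -
    have "leval (A h) (w^2) = (\<Sum>k\<in>JJ l. A h k * (w^2) powi k)"
      by (rule leval_J) (use Pl_zero[OF A] in blast)
    thus ?thesis unfolding ev by (simp add: sum_distrib_left mult_ac)
  qed
  finally show ?thesis .
qed




definition qq :: "nat \<Rightarrow> nat" where "qq l = 2*l - 1"
definition dd :: "nat \<Rightarrow> nat" where "dd l = (2*l+1) * qq l"
definition hh :: "nat \<Rightarrow> nat \<Rightarrow> int" where "hh l i = int (i div qq l) - int l"
definition jj :: "nat \<Rightarrow> nat \<Rightarrow> int" where "jj l i = int (i mod qq l) - (int l - 1)"
definition idx :: "nat \<Rightarrow> int \<Rightarrow> int \<Rightarrow> nat" where
  "idx l h j = nat (h + int l) * qq l + nat (j + int l - 1)"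

lemma hh_jj_range: assumes l: "l \<ge> 1" and i: "i < dd l"
  shows "hh l i \<in> II l" "jj l i \<in> JJ l"
proof -
  have q: "qq l > 0" using l unfolding qq_def by simp
  have "i div qq l < 2*l+1" using i unfolding dd_def by (simp add: less_mult_imp_div_less)
  thus "hh l i \<in> II l" unfolding hh_def by auto
  have "i mod qq l < qq l" using q by simp
  hence "int (i mod qq l) \<le> 2 * int l - 2" using l unfolding qq_def by linarith
  thus "jj l i \<in> JJ l" unfolding jj_def by auto
qed

lemma idx_props: assumes l: "l \<ge> 1" and h: "h \<in> II l" and j: "j \<in> JJ l"
  shows "idx l h j < dd l" "hh l (idx l h j) = h" "jj l (idx l h j) = j"
proof -
  have q: "qq l > 0" using l unfolding qq_def by simp
  have b: "nat (j + int l - 1) < qq l" using j l unfolding qq_def by auto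
  have a: "nat (h + int l) \<le> 2*l" using h by auto
  have "nat (h + int l) * qq l + nat (j + int l - 1) < nat (h + int l) * qq l + qq l" using b by simp
  also have "\<dots> = (nat (h + int l) + 1) * qq l" by simp
  also have "\<dots> \<le> (2*l+1) * qq l" using a by (intro mult_right_mono) auto
  finally show "idx l h j < dd l" unfolding idx_def dd_def .
  have d: "idx l h j div qq l = nat (h + int l)" unfolding idx_def using b q by simp
  have m: "idx l h j mod qq l = nat (j + int l - 1)" unfolding idx_def using b q by simp
  show "hh l (idx l h j) = h" unfolding hh_def d using h by auto
  show "jj l (idx l h j) = j" unfolding jj_def m using j by auto
qed

lemma idx_inv: assumes l: "l \<ge> 1" and i: "i < dd l"
  shows "idx l (hh l i) (jj l i) = i"
proof -
  have "nat (hh l i + int l) = i div qq l" "nat (jj l i + int l - 1) = i mod qq l"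
    unfolding hh_def jj_def by auto
  thus ?thesis unfolding idx_def by simp
qed

lemma bij_hj: assumes l: "l \<ge> 1"
  shows "bij_betw (\<lambda>i. (hh l i, jj l i)) {..<dd l} (II l \<times> JJ l)"
proof (rule bij_betw_byWitness[where f' = "\<lambda>(h,j). idx l h j"])
  show "\<forall>a\<in>{..<dd l}. (case (hh l a, jj l a) of (h, j) \<Rightarrow> idx l h j) = a"
    using idx_inv[OF l] by auto
  show "\<forall>a'\<in>II l \<times> JJ l. (hh l (case a' of (h, j) \<Rightarrow> idx l h j), jj l (case a' of (h, j) \<Rightarrow> idx l h j)) = a'"
    using idx_props[OF l] by auto
  show "(\<lambda>i. (hh l i, jj l i)) ` {..<dd l} \<subseteq> II l \<times> JJ l"
    using hh_jj_range[OF l] by auto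
  show "(\<lambda>(h, j). idx l h j) ` (II l \<times> JJ l) \<subseteq> {..<dd l}"
    using idx_props[OF l] by auto
qed

definition enc :: "nat \<Rightarrow> (int \<Rightarrow> int \<Rightarrow> complex) \<Rightarrow> complex vec" where
  "enc l A = vec (dd l) (\<lambda>i. A (hh l i) (jj l i))"

definition dec :: "nat \<Rightarrow> complex vec \<Rightarrow> (int \<Rightarrow> int \<Rightarrow> complex)" where
  "dec l v = (\<lambda>h j. if h \<in> II l \<and> j \<in> JJ l then v $ idx l h j else 0)"

definition MM :: "nat \<Rightarrow> complex mat" where
  "MM l = mat (dd l) (dd l) (\<lambda>(i,i'). if jj l i' = 2 * jj l i - hh l i' then tau l (hh l i) (hh l i') else 0)"

lemma enc_carrier: "enc l A \<in> carrier_vec (dd l)" unfolding enc_def by simp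

lemma dec_enc: assumes l: "l \<ge> 1" and A: "A \<in> Pl_vec l" shows "dec l (enc l A) = A"
proof (intro ext)
  fix h j
  show "dec l (enc l A) h j = A h j"
  proof (cases "h \<in> II l \<and> j \<in> JJ l")
    case True
    thus ?thesis unfolding dec_def enc_def using idx_props[OF l] by auto
  next
    case False
    thus ?thesis unfolding dec_def using Pl_zero[OF A False] by auto
  qed
qed

lemma enc_dec: assumes l: "l \<ge> 1" and v: "v \<in> carrier_vec (dd l)" shows "enc l (dec l v) = v"
proof
  show "dim_vec (enc l (dec l v)) = dim_vec v" using v unfolding enc_def by simp
  fix i assume "i < dim_vec v"
  hence i: "i < dd l" using v by simp
  show "enc l (dec l v) $ i = v $ i"
    unfolding enc_def dec_def using i hh_jj_range[OF l i] idx_inv[OF l i] by simp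
qed

lemma dec_Pl: "dec l v \<in> Pl_vec l" unfolding dec_def Pl_vec_def by auto

lemma MM_carrier: "MM l \<in> carrier_mat (dd l) (dd l)" unfolding MM_def by simp

lemma enc_S: assumes l: "l \<ge> 1" and A: "A \<in> Pl_vec l"
  shows "enc l (S_op l A) = MM l *\<^sub>v enc l A"
proof
  show "dim_vec (enc l (S_op l A)) = dim_vec (MM l *\<^sub>v enc l A)" unfolding enc_def MM_def by simp
  fix i assume "i < dim_vec (MM l *\<^sub>v enc l A)"
  hence i: "i < dd l" unfolding MM_def by simp
  note r = hh_jj_range[OF l i]
  define t where "t = 2 * jj l i"
  have "(MM l *\<^sub>v enc l A) $ i = (\<Sum>i'\<in>{0..<dd l}. (if jj l i' = t - hh l i' then tau l (hh l i) (hh l i') else 0) * A (hh l i') (jj l i'))"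
    using i unfolding MM_def enc_def t_def by (simp add: scalar_prod_def)
  also have "\<dots> = (\<Sum>i'\<in>{..<dd l}. (\<lambda>(n,k). (if k = t - n then tau l (hh l i) n else 0) * A n k) (hh l i', jj l i'))"
    by (simp add: atLeast0LessThan)
  also have "\<dots> = (\<Sum>z\<in>II l \<times> JJ l. (\<lambda>(n,k). (if k = t - n then tau l (hh l i) n else 0) * A n k) z)"
    by (rule sum.reindex_bij_betw[OF bij_hj[OF l]])
  also have "\<dots> = (\<Sum>n\<in>II l. \<Sum>k\<in>JJ l. (if k = t - n then tau l (hh l i) n else 0) * A n k)"
    by (rule sum.cartesian_product[symmetric])
  also have "\<dots> = (\<Sum>n\<in>II l. tau l (hh l i) n * A n (t - n))"
  proof (rule sum.cong[OF refl])
    fix n assume n: "n \<in> II l"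
    have "(\<Sum>k\<in>JJ l. (if k = t - n then tau l (hh l i) n else 0) * A n k)
        = (\<Sum>k\<in>JJ l. if k = t - n then tau l (hh l i) n * A n k else 0)"
      by (rule sum.cong) auto
    also have "\<dots> = (if t - n \<in> JJ l then tau l (hh l i) n * A n (t - n) else 0)"
      by (rule sum.delta) simp
    also have "\<dots> = tau l (hh l i) n * A n (t - n)"
      using Pl_zero[OF A, of n "t - n"] by auto
    finally show "(\<Sum>k\<in>JJ l. (if k = t - n then tau l (hh l i) n else 0) * A n k) = tau l (hh l i) n * A n (t - n)" .
  qed
  also have "\<dots> = enc l (S_op l A) $ i"
    unfolding enc_def S_op_def TA_coeff_def t_def using i r by simp
  finally show "enc l (S_op l A) $ i = (MM l *\<^sub>v enc l A) $ i" by simp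
qed

lemma eig_spectrum: assumes l: "l \<ge> 1" shows "S_eigenvalues l = spectrum (MM l)"
proof (rule equalityI; rule subsetI)
  fix ev assume "ev \<in> S_eigenvalues l"
  then obtain A where A: "A \<in> Pl_vec l" "A \<noteq> (\<lambda>h j. 0)" "S_op l A = (\<lambda>h j. ev * A h j)"
    unfolding S_eigenvalues_def by blast
  have nz: "enc l A \<noteq> 0\<^sub>v (dd l)"
  proof
    assume "enc l A = 0\<^sub>v (dd l)"
    hence "dec l (enc l A) = (\<lambda>h j. 0)"
    proof (intro ext)
      fix h j assume e: "enc l A = 0\<^sub>v (dd l)"
      show "dec l (enc l A) h j = 0"
      proof (cases "h \<in> II l \<and> j \<in> JJ l")
        case True
        thus ?thesis unfolding dec_def e using idx_props(1)[OF l, of h j] by simp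
      qed (auto simp: dec_def)
    qed
    thus False using dec_enc[OF l A(1)] A(2) by simp
  qed
  have "MM l *\<^sub>v enc l A = ev \<cdot>\<^sub>v enc l A"
    unfolding enc_S[OF l A(1), symmetric] A(3) by (auto simp: enc_def)
  thus "ev \<in> spectrum (MM l)" unfolding spectrum_def eigenvalue_def eigenvector_def
    using nz enc_carrier[of l A] MM_carrier[of l] by auto
next
  fix ev assume "ev \<in> spectrum (MM l)"
  then obtain v where v: "v \<in> carrier_vec (dd l)" "v \<noteq> 0\<^sub>v (dd l)" "MM l *\<^sub>v v = ev \<cdot>\<^sub>v v"
    unfolding spectrum_def eigenvalue_def eigenvector_def using MM_carrier[of l] by auto
  define A where "A = dec l v"
  have A: "A \<in> Pl_vec l" unfolding A_def by (rule dec_Pl)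
  have nz: "A \<noteq> (\<lambda>h j. 0)"
  proof
    assume "A = (\<lambda>h j. 0)"
    hence "enc l A = 0\<^sub>v (dd l)" unfolding enc_def by auto
    thus False using enc_dec[OF l v(1)] v(2) unfolding A_def by simp
  qed
  have "S_op l A = dec l (enc l (S_op l A))" using dec_enc[OF l S_in_Pl[OF A]] by simp
  also have "enc l (S_op l A) = ev \<cdot>\<^sub>v v"
    using enc_S[OF l A] enc_dec[OF l v(1)] v(3) unfolding A_def by simp
  hence "dec l (enc l (S_op l A)) = dec l (ev \<cdot>\<^sub>v v)" by simp
  also have "\<dots> = (\<lambda>h j. ev * A h j)"
    unfolding A_def dec_def using v(1) idx_props[OF l] by (auto intro!: ext)
  finally show "ev \<in> S_eigenvalues l" unfolding S_eigenvalues_def using A nz by blast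
qed

lemma dd_pos: "l \<ge> 1 \<Longrightarrow> dd l > 0" unfolding dd_def qq_def by simp




theorem mainTheorem11:
  fixes l :: nat
  assumes "l \<ge> 1"
  shows "(\<forall>A\<in>Pl_vec l. S_op l A \<in> Pl_vec l)
       \<and> rho_S l \<le> 1
       \<and> (rho_S l = 1 \<longrightarrow>
            (\<exists>c A. cmod c = 1 \<and> A \<in> Pl_vec l \<and> A \<noteq> (\<lambda>h j. 0) \<and>
               (\<forall>w. w \<noteq> 0 \<longrightarrow>
                  (\<forall>h\<in>{-int l..int l}. T_eval l A w h = c * leval (A h) (w ^ 2)))))"
proof -
  have l: "l \<ge> 1" by fact
  have fin: "finite (S_eigenvalues l)" unfolding eig_spectrum[OF l]
    by (rule card_finite_spectrum(1)[OF MM_carrier])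
  have ne: "S_eigenvalues l \<noteq> {}" unfolding eig_spectrum[OF l]
    by (rule spectrum_non_empty[OF MM_carrier dd_pos[OF l]])
  have bnd: "cmod ev \<le> 1" if "ev \<in> S_eigenvalues l" for ev
    using that unfolding S_eigenvalues_def using eigen_bound(1) by blast
  have rho: "rho_S l = Max (cmod ` S_eigenvalues l)"
    unfolding rho_S_def using fin ne by (simp add: cSup_eq_Max)
  have p2: "rho_S l \<le> 1" unfolding rho using fin ne bnd by auto
  have p3: "\<exists>c A. cmod c = 1 \<and> A \<in> Pl_vec l \<and> A \<noteq> (\<lambda>h j. 0) \<and>
               (\<forall>w. w \<noteq> 0 \<longrightarrow>
                  (\<forall>h\<in>{-int l..int l}. T_eval l A w h = c * leval (A h) (w ^ 2)))"
    if r1: "rho_S l = 1"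
  proof -
    have "Max (cmod ` S_eigenvalues l) \<in> cmod ` S_eigenvalues l"
      using fin ne by (intro Max_in) auto
    then obtain ev where ev: "ev \<in> S_eigenvalues l" "cmod ev = 1" using r1 unfolding rho by auto
    then obtain A where A: "A \<in> Pl_vec l" "A \<noteq> (\<lambda>h j. 0)" "S_op l A = (\<lambda>h j. ev * A h j)"
      unfolding S_eigenvalues_def by blast
    have z: "\<forall>h\<in>II l. \<forall>j\<in>J2 l - EE l. TA_coeff l A h j = 0"
      by (rule eigen_bound(2)[OF A ev(2)])
    show ?thesis using T_eval_eq[OF A(1) A(3) z] A ev(2) by blast
  qed
  show ?thesis using S_in_Pl p2 p3 by blast
qed


end
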